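(* Let $V$ be a finite-dimensional real vector space, $\phi\in\mathrm{End}(V)\setminus\{0\}$ and $W=\mathrm{im}(\phi)$. Then the map \[V^*\oplus C_{sl}(W)\to\mathcal{Q}(\mathfrak{g}_\phi),\quad(\alpha,c)\mapsto\zeta_{\alpha,c}\] is a linear isomorphism, where $\zeta_{\alpha,c}(v,t)=c(\phi(v)/t)\,t+\alpha(v)$ for $t\ne 0$ and $\zeta_{\alpha,c}(v,0)=\alpha(v)$. In particular $\mathcal{Q}(\mathfrak{g}_\phi)$ is infinite-dimensional.
   Context: $\mathfrak{g}_\phi$ is $V\times\mathbb{R}$ with bracket $[(v,s),(w,t)]=(s\phi(w)-t\phi(v),0)$. $\mathcal{Q}(\mathfrak{g}_\phi)$ is the space of continuous Lie quasi-states, i.e. continuous $\zeta:\mathfrak{g}_\phi\to\mathbb{R}$ with $\zeta(aX+bY)=a\zeta(X)+b\zeta(Y)$ for all $a,b\in\mathbb{R}$ and commuting $X,Y$. $C_{sl}(W)$ is the space of continuous sublinear functions $c:W\to\mathbb{R}$, i.e. $c(w)/\|w\|\to 0$ as $w\to\infty$. *)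

theory Defs
  imports "HOL-Analysis.Analysis"
begin

definition gbracket :: "('v::real_vector \<Rightarrow> 'v) \<Rightarrow> 'v \<times> real \<Rightarrow> 'v \<times> real \<Rightarrow> 'v \<times> real" where
  "gbracket \<phi> X Y = (snd X *\<^sub>R \<phi> (fst Y) - snd Y *\<^sub>R \<phi> (fst X), 0)"


definition gcommute :: "('v::real_vector \<Rightarrow> 'v) \<Rightarrow> 'v \<times> real \<Rightarrow> 'v \<times> real \<Rightarrow> bool" where
  "gcommute \<phi> X Y \<longleftrightarrow> gbracket \<phi> X Y = 0"

definition lie_quasi_states :: "('v::real_normed_vector \<Rightarrow> 'v) \<Rightarrow> (('v \<times> real) \<Rightarrow> real) set" where
  "lie_quasi_states \<phi> = {\<zeta>. continuous_on UNIV \<zeta> \<and>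
     (\<forall>X Y (a::real) (b::real). gcommute \<phi> X Y \<longrightarrow> \<zeta> (a *\<^sub>R X + b *\<^sub>R Y) = a * \<zeta> X + b * \<zeta> Y)}"

text \<open>Continuous sublinear functions on a subset W (represented extensionally: zero outside W).\<close>
definition Csl :: "'v::real_normed_vector set \<Rightarrow> ('v \<Rightarrow> real) set" where
  "Csl W = {c. continuous_on W c \<and> (\<forall>w. w \<notin> W \<longrightarrow> c w = 0) \<and>
     (\<forall>e>0. \<exists>R. \<forall>w\<in>W. norm w \<ge> R \<longrightarrow> \<bar>c w\<bar> \<le> e * norm w)}"

definition dual_space :: "('v::real_vector \<Rightarrow> real) set" where
  "dual_space = {\<alpha>. linear \<alpha>}"

definition zeta :: "('v::real_vector \<Rightarrow> 'v) \<Rightarrow> ('v \<Rightarrow> real) \<Rightarrow> ('v \<Rightarrow> real) \<Rightarrow> 'v \<times> real \<Rightarrow> real" where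
  "zeta \<phi> \<alpha> c X = (if snd X \<noteq> 0 then c ((1 / snd X) *\<^sub>R \<phi> (fst X)) * snd X + \<alpha> (fst X)
                     else \<alpha> (fst X))"

definition infinite_dimensional_fun_set :: "('a \<Rightarrow> real) set \<Rightarrow> bool" where
  "infinite_dimensional_fun_set S \<longleftrightarrow>
     (\<forall>n::nat. \<exists>f :: nat \<Rightarrow> 'a \<Rightarrow> real. (\<forall>i<n. f i \<in> S) \<and>
        (\<forall>a :: nat \<Rightarrow> real. (\<forall>x. (\<Sum>i<n. a i * f i x) = 0) \<longrightarrow> (\<forall>i<n. a i = 0)))"

end

theory Submission imports Defs begin

lemma lin2: "linear f \<Longrightarrow> f (a *\<^sub>R x + b *\<^sub>R y) = a *\<^sub>R f x + b *\<^sub>R f y"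
  by (simp add: linear_add linear_scale)

lemma lin_cont: "linear (f::'a::euclidean_space \<Rightarrow> 'b::real_normed_vector) \<Longrightarrow> continuous_on S f"
  by (simp add: linear_conv_bounded_linear linear_continuous_on)

lemma sublin_bound:
  fixes W :: "'v::euclidean_space set"
  assumes c: "c \<in> Csl W" and W: "closed W" and e: "e > 0"
  shows "\<exists>M\<ge>0. \<forall>w\<in>W. \<bar>c w\<bar> \<le> e * norm w + M"
proof -
  from c e obtain R where R: "\<forall>w\<in>W. norm w \<ge> R \<longrightarrow> \<bar>c w\<bar> \<le> e * norm w"
    unfolding Csl_def by blast
  have "compact (cball 0 R \<inter> W)" using W by (simp add: compact_Int_closed)
  moreover have "continuous_on (cball 0 R \<inter> W) c"
    using c unfolding Csl_def by (auto intro: continuous_on_subset)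
  ultimately have "compact (c ` (cball 0 R \<inter> W))" by (rule compact_continuous_image[rotated])
  then obtain B where B: "\<forall>y\<in>c ` (cball 0 R \<inter> W). norm y \<le> B"
    using compact_imp_bounded bounded_iff by metis
  show ?thesis
  proof (intro exI[of _ "max B 0"] conjI ballI)
    fix w assume w: "w \<in> W"
    show "\<bar>c w\<bar> \<le> e * norm w + max B 0"
    proof (cases "norm w \<ge> R")
      case True then show ?thesis using R w by force
    next
      case False
      then have "\<bar>c w\<bar> \<le> B" using B w by auto
      moreover have "e * norm w \<ge> 0" using e by simp
      ultimately show ?thesis by linarith
    qed
  qed simp
qed

lemma zeta_cont:
  fixes \<phi> :: "'v::euclidean_space \<Rightarrow> 'v"
  assumes lp: "linear \<phi>" and la: "linear \<alpha>" and c: "c \<in> Csl (range \<phi>)"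
  shows "continuous_on UNIV (zeta \<phi> \<alpha> c)"
proof -
  have clW: "closed (range \<phi>)" using lp by (simp add: closed_subspace subspace_UNIV linear_subspace_image)
  have cW: "continuous_on (range \<phi>) c" using c unfolding Csl_def by blast
  have cp: "continuous_on S \<phi>" for S using lp by (rule lin_cont)
  have ca: "continuous_on S \<alpha>" for S using la by (rule lin_cont)
  have inW: "(1 / t) *\<^sub>R \<phi> v \<in> range \<phi>" for t v
    using lp by (metis linear_scale rangeI)
  { fix X :: "'v \<times> real" assume "snd X \<noteq> 0"
    define S where "S = {X :: 'v \<times> real. snd X \<noteq> 0}"
    have oS: "open S" unfolding S_def by (intro open_Collect_neq continuous_intros)
    have "continuous_on S (\<lambda>X. c ((1 / snd X) *\<^sub>R \<phi> (fst X)) * snd X + \<alpha> (fst X))"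
    proof (intro continuous_intros)
      show "continuous_on S (\<lambda>X. c ((1 / snd X) *\<^sub>R \<phi> (fst X)))"
        apply (rule continuous_on_compose2[OF cW, where f="\<lambda>X. (1 / snd X) *\<^sub>R \<phi> (fst X)"])
        apply (intro continuous_intros continuous_on_compose2[OF cp])
        using inW by (auto simp: S_def)
      show "continuous_on S (\<lambda>X. \<alpha> (fst X))"
        by (intro continuous_on_compose2[OF ca] continuous_intros) auto
    qed
    then have "continuous_on S (zeta \<phi> \<alpha> c)"
      by (rule continuous_on_cong[THEN iffD1, rotated 2]) (auto simp: S_def zeta_def)
    then have "isCont (zeta \<phi> \<alpha> c) X" using oS \<open>snd X \<noteq> 0\<close>
      using continuous_on_eq_continuous_at[OF oS] unfolding S_def by blast
  } note nz = this
  { fix v0 :: 'v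
    have "(zeta \<phi> \<alpha> c \<longlongrightarrow> \<alpha> v0) (at (v0, 0))"
      unfolding tendsto_iff
    proof (intro allI impI)
      fix \<epsilon> :: real assume \<epsilon>: "\<epsilon> > 0"
      define e where "e = \<epsilon> / (2 * (norm (\<phi> v0) + 1))"
      have e: "e > 0" using \<epsilon> unfolding e_def by (intro divide_pos_pos) (auto intro: add_nonneg_pos)
      have e2: "e * norm (\<phi> v0) < \<epsilon>"
      proof -
        have "e * norm (\<phi> v0) \<le> e * (norm (\<phi> v0) + 1)" using e by simp
        also have "\<dots> = \<epsilon> / 2" proof - have "norm (\<phi> v0) + 1 \<noteq> 0" by (metis add_nonneg_pos norm_ge_zero zero_less_one less_irrefl) then show ?thesis unfolding e_def by (simp add: field_simps) qed
        finally show ?thesis using \<epsilon> by simp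
      qed
      obtain M where M: "M \<ge> 0" "\<forall>w\<in>range \<phi>. \<bar>c w\<bar> \<le> e * norm w + M"
        using sublin_bound[OF c clW e] by blast
      define G where "G X = e * norm (\<phi> (fst X)) + M * \<bar>snd X\<bar> + \<bar>\<alpha> (fst X) - \<alpha> v0\<bar>" for X :: "'v \<times> real"
      have "continuous_on UNIV G" unfolding G_def
        by (intro continuous_intros continuous_on_compose2[OF cp] continuous_on_compose2[OF ca]) auto
      then have "(G \<longlongrightarrow> G (v0, 0)) (at (v0, 0))"
        by (simp add: continuous_on_eq_continuous_at isCont_def)
      moreover have "G (v0, 0) < \<epsilon>" using e2 by (simp add: G_def)
      ultimately have ev: "eventually (\<lambda>X. G X < \<epsilon>) (at (v0, 0))" by (rule order_tendstoD(2))
      have bnd: "dist (zeta \<phi> \<alpha> c X) (\<alpha> v0) \<le> G X" for X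
      proof (cases X)
        case (Pair v t)
        show ?thesis
        proof (cases "t = 0")
          case True then show ?thesis using Pair e M by (simp add: zeta_def G_def dist_real_def)
        next
          case False
          have "\<bar>c ((1 / t) *\<^sub>R \<phi> v)\<bar> \<le> e * norm ((1 / t) *\<^sub>R \<phi> v) + M" using M inW by blast
          then have "\<bar>c ((1 / t) *\<^sub>R \<phi> v)\<bar> * \<bar>t\<bar> \<le> (e * norm ((1 / t) *\<^sub>R \<phi> v) + M) * \<bar>t\<bar>"
            by (simp add: mult_right_mono)
          also have "\<dots> = e * norm (\<phi> v) + M * \<bar>t\<bar>" using False by (simp add: field_simps)
          finally have "\<bar>c ((1 / t) *\<^sub>R \<phi> v) * t\<bar> \<le> e * norm (\<phi> v) + M * \<bar>t\<bar>" by (simp add: abs_mult)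
          then show ?thesis using Pair False by (simp add: zeta_def G_def dist_real_def)
        qed
      qed
      show "eventually (\<lambda>X. dist (zeta \<phi> \<alpha> c X) (\<alpha> v0) < \<epsilon>) (at (v0, 0))"
        using ev by eventually_elim (use bnd in \<open>auto intro: le_less_trans\<close>)
    qed
    then have "isCont (zeta \<phi> \<alpha> c) (v0, 0)" by (simp add: isCont_def zeta_def)
  } note z = this
  show ?thesis
  proof (clarsimp simp: continuous_on_eq_continuous_at)
    fix v :: 'v and t :: real
    show "isCont (zeta \<phi> \<alpha> c) (v, t)"
      using nz[of "(v,t)"] z[of v] by (cases "t = 0") auto
  qed
qed

lemma zeta_at:
  assumes "r \<noteq> 0" "\<phi> x = r *\<^sub>R u"
  shows "zeta \<phi> \<alpha> c (x, r) = c u * r + \<alpha> x"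
  using assms by (simp add: zeta_def)

lemma zeta_qs1:
  assumes lp: "linear \<phi>" and la: "linear \<alpha>" and s: "s \<noteq> 0"
    and com: "s *\<^sub>R \<phi> w = t *\<^sub>R \<phi> v"
  shows "zeta \<phi> \<alpha> c (a *\<^sub>R (v, s) + b *\<^sub>R (w, t)) = a * zeta \<phi> \<alpha> c (v, s) + b * zeta \<phi> \<alpha> c (w, t)"
proof -
  define u where "u = (1 / s) *\<^sub>R \<phi> v"
  have pv: "\<phi> v = s *\<^sub>R u" using s by (simp add: u_def)
  have pw: "\<phi> w = t *\<^sub>R u"
  proof -
    have "s *\<^sub>R \<phi> w = s *\<^sub>R (t *\<^sub>R u)" using com pv by (simp add: algebra_simps)
    then show ?thesis using s by (metis scaleR_cancel_left)
  qed
  have psum: "\<phi> (a *\<^sub>R v + b *\<^sub>R w) = (a * s + b * t) *\<^sub>R u"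
    using lin2[OF lp] pv pw by (simp add: algebra_simps)
  have asum: "\<alpha> (a *\<^sub>R v + b *\<^sub>R w) = a * \<alpha> v + b * \<alpha> w"
    using lin2[OF la] by simp
  have zx: "zeta \<phi> \<alpha> c (v, s) = c u * s + \<alpha> v" using zeta_at[of s \<phi> v u] s pv by simp
  have zy: "zeta \<phi> \<alpha> c (w, t) = (if t \<noteq> 0 then c u * t + \<alpha> w else \<alpha> w)"
    using zeta_at[of t \<phi> w u] pw by (auto simp: zeta_def)
  have zs: "zeta \<phi> \<alpha> c (a *\<^sub>R v + b *\<^sub>R w, a * s + b * t) =
      (if a * s + b * t \<noteq> 0 then c u * (a * s + b * t) + \<alpha> (a *\<^sub>R v + b *\<^sub>R w) else \<alpha> (a *\<^sub>R v + b *\<^sub>R w))"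
    using zeta_at[of "a * s + b * t" \<phi> _ u] psum by (auto simp: zeta_def)
  have dd: "a * (s * c u) + b * (t * c u) = (a * s + b * t) * c u" by (simp add: algebra_simps)
  show ?thesis
    using zx zy zs asum by (auto simp: algebra_simps) (metis dd mult_zero_left)
qed

lemma gcommute_iff: "gcommute \<phi> (v, s) (w, t) \<longleftrightarrow> s *\<^sub>R \<phi> w = t *\<^sub>R \<phi> v"
  by (simp add: gcommute_def gbracket_def zero_prod_def)

lemma zeta_qs:
  assumes lp: "linear \<phi>" and la: "linear \<alpha>" and com: "gcommute \<phi> X Y"
  shows "zeta \<phi> \<alpha> c (a *\<^sub>R X + b *\<^sub>R Y) = a * zeta \<phi> \<alpha> c X + b * zeta \<phi> \<alpha> c Y"
proof -
  obtain v s w t where X: "X = (v, s)" and Y: "Y = (w, t)" by (cases X, cases Y) auto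
  have com': "s *\<^sub>R \<phi> w = t *\<^sub>R \<phi> v" using com by (simp add: X Y gcommute_iff)
  show ?thesis
  proof (cases "s \<noteq> 0")
    case True then show ?thesis using zeta_qs1[OF lp la True com'] X Y by simp
  next
    case s0: False
    show ?thesis
    proof (cases "t \<noteq> 0")
      case True
      have "zeta \<phi> \<alpha> c (b *\<^sub>R (w, t) + a *\<^sub>R (v, s)) = b * zeta \<phi> \<alpha> c (w, t) + a * zeta \<phi> \<alpha> c (v, s)"
        by (rule zeta_qs1[OF lp la True]) (use com' in simp)
      then show ?thesis using X Y by (simp add: add.commute)
    next
      case False
      then show ?thesis using s0 X Y lin2[OF la] by (simp add: zeta_def)
    qed
  qed
qed

lemma zeta_in:
  fixes \<phi> :: "'v::euclidean_space \<Rightarrow> 'v"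
  assumes lp: "linear \<phi>" and la: "linear \<alpha>" and c: "c \<in> Csl (range \<phi>)"
  shows "zeta \<phi> \<alpha> c \<in> lie_quasi_states \<phi>"
  unfolding lie_quasi_states_def using zeta_cont[OF lp la c] zeta_qs[OF lp la] by blast

lemma zeta_surj:
  fixes \<phi> :: "'v::euclidean_space \<Rightarrow> 'v"
  assumes lp: "linear \<phi>" and z: "\<zeta> \<in> lie_quasi_states \<phi>"
  shows "\<exists>\<alpha> c. linear \<alpha> \<and> c \<in> Csl (range \<phi>) \<and> \<zeta> = zeta \<phi> \<alpha> c"
proof -
  have cz: "continuous_on UNIV \<zeta>" and
    qs: "\<And>X Y a b. gcommute \<phi> X Y \<Longrightarrow> \<zeta> (a *\<^sub>R X + b *\<^sub>R Y) = a * \<zeta> X + b * \<zeta> Y"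
    using z unfolding lie_quasi_states_def by auto
  have hom: "\<zeta> (r *\<^sub>R X) = r * \<zeta> X" for r X
  proof -
    have "gcommute \<phi> X X" by (cases X) (simp add: gcommute_iff)
    from qs[OF this, of r 0] show ?thesis by simp
  qed
  define \<alpha> where "\<alpha> v = \<zeta> (v, 0)" for v
  have la: "linear \<alpha>"
  proof (rule linearI)
    fix x y
    have "gcommute \<phi> (x, 0) (y, 0)" by (simp add: gcommute_iff)
    from qs[OF this, of 1 1] show "\<alpha> (x + y) = \<alpha> x + \<alpha> y" by (simp add: \<alpha>_def)
  next
    fix r x show "\<alpha> (r *\<^sub>R x) = r *\<^sub>R \<alpha> x" using hom[of r "(x, 0)"] by (simp add: \<alpha>_def)
  qed
  obtain g where lg: "linear g" and gi: "\<forall>w\<in>range \<phi>. \<phi> (g w) = w"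
    using linear_exists_right_inverse_on[of \<phi> UNIV] lp by auto
  have wd: "\<zeta> (x, 1) - \<zeta> (x, 0) = \<zeta> (y, 1) - \<zeta> (y, 0)" if "\<phi> x = \<phi> y" for x y
  proof -
    have "gcommute \<phi> (x, 1) (y, 1)" using that by (simp add: gcommute_iff)
    from qs[OF this, of 1 "-1"] have "\<zeta> (x - y, 0) = \<zeta> (x, 1) - \<zeta> (y, 1)" by simp
    moreover have "\<zeta> (x - y, 0) = \<zeta> (x, 0) - \<zeta> (y, 0)"
      using linear_diff[OF la, of x y] by (simp add: \<alpha>_def)
    ultimately show ?thesis by simp
  qed
  define c where "c w = (if w \<in> range \<phi> then \<zeta> (g w, 1) - \<zeta> (g w, 0) else 0)" for w
  have eq: "\<zeta> = zeta \<phi> \<alpha> c"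
  proof
    fix X :: "'v \<times> real"
    obtain v t where X: "X = (v, t)" by (cases X)
    show "\<zeta> X = zeta \<phi> \<alpha> c X"
    proof (cases "t = 0")
      case True then show ?thesis by (simp add: X zeta_def \<alpha>_def)
    next
      case False
      define v' where "v' = (1 / t) *\<^sub>R v"
      have pv: "(1 / t) *\<^sub>R \<phi> v = \<phi> v'" unfolding v'_def using lp by (simp add: linear_scale)
      have "c (\<phi> v') = \<zeta> (v', 1) - \<zeta> (v', 0)"
        unfolding c_def using wd[of "g (\<phi> v')" v'] gi by auto
      moreover have "\<zeta> (v, t) = t * \<zeta> (v', 1)" and "\<zeta> (v, 0) = t * \<zeta> (v', 0)"
        using hom[of t "(v', 1)"] hom[of t "(v', 0)"] False by (simp_all add: v'_def)
      ultimately show ?thesis using False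
        by (simp add: X zeta_def pv \<alpha>_def algebra_simps) (metis distrib_left)
    qed
  qed
  have cg: "continuous_on S g" for S using lg by (rule lin_cont)
  have ccont: "continuous_on (range \<phi>) c"
  proof -
    have "continuous_on (range \<phi>) (\<lambda>w. \<zeta> (g w, 1) - \<zeta> (g w, 0))"
      by (intro continuous_intros continuous_on_compose2[OF cz] continuous_on_compose2[OF cg]) auto
    then show ?thesis by (rule continuous_on_cong[THEN iffD1, rotated 2]) (auto simp: c_def)
  qed
  obtain K where K: "\<And>x. norm (g x) \<le> norm x * K"
    using bounded_linear.bounded lg by (metis linear_conv_bounded_linear)
  define KS where "KS = cball (0::'v) K \<times> cball (0::real) 1"
  have "compact KS" unfolding KS_def by (intro compact_Times compact_cball)
  then have uc: "uniformly_continuous_on KS \<zeta>"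
    by (intro compact_uniformly_continuous continuous_on_subset[OF cz]) auto
  have sub: "\<exists>R. \<forall>w\<in>range \<phi>. norm w \<ge> R \<longrightarrow> \<bar>c w\<bar> \<le> e * norm w" if e: "e > 0" for e
  proof -
    obtain d where d: "d > 0" and dd: "\<forall>x\<in>KS. \<forall>x'\<in>KS. dist x' x < d \<longrightarrow> dist (\<zeta> x') (\<zeta> x) < e"
      using uc e unfolding uniformly_continuous_on_def by blast
    show ?thesis
    proof (intro exI[of _ "1 / d + 1"] ballI impI)
      fix w assume w: "w \<in> range \<phi>" and R: "1 / d + 1 \<le> norm w"
      define r where "r = norm w"
      have r: "r > 0" using R d unfolding r_def
        by (smt (verit) divide_pos_pos)
      have rd: "1 / r < d" using R d r unfolding r_def
        by (smt (verit, best) divide_less_eq mult.commute nonzero_mult_div_cancel_left zero_less_divide_iff)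
      have r1: "r \<ge> 1" using R d unfolding r_def by (smt (verit) divide_pos_pos)
      define u where "u = (1 / r) *\<^sub>R w"
      have nu: "norm u = 1" using r by (simp add: u_def r_def)
      have wu: "w = r *\<^sub>R u" using r by (simp add: u_def)
      have gw: "g w = r *\<^sub>R g u" using wu lg by (simp add: linear_scale)
      have P1: "(g u, 1 / r) \<in> KS" and P0: "(g u, 0) \<in> KS"
        using K[of u] nu r r1 unfolding KS_def by auto
      have "dist (g u, 1 / r) (g u, 0) < d" using rd r by (simp add: dist_Pair_Pair dist_real_def)
      with dd P1 P0 have dz: "\<bar>\<zeta> (g u, 1 / r) - \<zeta> (g u, 0)\<bar> < e" by (auto simp: dist_real_def)
      have "c w = \<zeta> (r *\<^sub>R (g u, 1 / r)) - \<zeta> (r *\<^sub>R (g u, 0))" using w r by (simp add: c_def gw)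
      also have "\<dots> = r * (\<zeta> (g u, 1 / r) - \<zeta> (g u, 0))" by (simp only: hom) (simp add: algebra_simps)
      finally have "\<bar>c w\<bar> = r * \<bar>\<zeta> (g u, 1 / r) - \<zeta> (g u, 0)\<bar>" using r by (simp add: abs_mult)
      also have "\<dots> \<le> r * e" using dz r by simp
      finally show "\<bar>c w\<bar> \<le> e * norm w" by (simp add: r_def mult.commute)
    qed
  qed
  have "c \<in> Csl (range \<phi>)" unfolding Csl_def using ccont sub by (auto simp: c_def)
  then show ?thesis using la eq by blast
qed

lemma zeta_inj:
  assumes "c \<in> Csl (range \<phi>)" "c' \<in> Csl (range \<phi>)" "zeta \<phi> \<alpha> c = zeta \<phi> \<alpha>' c'"
  shows "\<alpha> = \<alpha>' \<and> c = c'"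
proof -
  have aa: "\<alpha> v = \<alpha>' v" for v using fun_cong[OF assms(3), of "(v, 0)"] by (simp add: zeta_def)
  have cc: "c w = c' w" for w
  proof (cases "w \<in> range \<phi>")
    case True
    then obtain v where "w = \<phi> v" by auto
    then show ?thesis using fun_cong[OF assms(3), of "(v, 1)"] aa[of v] by (simp add: zeta_def)
  next
    case False then show ?thesis using assms(1,2) by (simp add: Csl_def)
  qed
  show ?thesis using aa cc by auto
qed

lemma inf_dim:
  fixes \<phi> :: "'v::euclidean_space \<Rightarrow> 'v"
  assumes lp: "linear \<phi>" and nz: "\<phi> \<noteq> (\<lambda>v. 0)"
  shows "infinite_dimensional_fun_set (lie_quasi_states \<phi>)"
  unfolding infinite_dimensional_fun_set_def
proof
  fix n :: nat
  obtain v0 where v0: "\<phi> v0 \<noteq> 0" using nz by auto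
  define w0 where "w0 = \<phi> v0"
  have ww: "inner w0 w0 \<noteq> 0" using v0 by (simp add: w0_def)
  define \<beta> where "\<beta> w = inner w w0 / inner w0 w0" for w
  define tent :: "real \<Rightarrow> real" where "tent x = max 0 (1 - \<bar>x\<bar>)" for x
  define cf where "cf i w = (if w \<in> range \<phi> then tent (\<beta> w - 3 * real i) else 0)" for i w
  define f where "f i = zeta \<phi> (\<lambda>v. 0) (cf i)" for i
  have csl: "cf i \<in> Csl (range \<phi>)" for i
  proof -
    have "continuous_on (range \<phi>) (\<lambda>w. tent (\<beta> w - 3 * real i))"
      unfolding tent_def \<beta>_def using ww by (intro continuous_intros) auto
    then have "continuous_on (range \<phi>) (cf i)"
      by (rule continuous_on_cong[THEN iffD1, rotated 2]) (auto simp: cf_def)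
    moreover have "\<exists>R. \<forall>w\<in>range \<phi>. norm w \<ge> R \<longrightarrow> \<bar>cf i w\<bar> \<le> e * norm w" if "e > 0" for e
    proof (intro exI[of _ "1 / e"] ballI impI)
      fix w :: 'v assume "1 / e \<le> norm w"
      then have "1 \<le> e * norm w" using that by (simp add: divide_le_eq mult.commute)
      moreover have "\<bar>cf i w\<bar> \<le> 1" by (simp add: cf_def tent_def)
      ultimately show "\<bar>cf i w\<bar> \<le> e * norm w" by linarith
    qed
    ultimately show ?thesis unfolding Csl_def by (auto simp: cf_def)
  qed
  have l0: "linear (\<lambda>v::'v. 0::real)" by (simp add: linear_zero)
  have mem: "\<forall>i<n. f i \<in> lie_quasi_states \<phi>"
    using zeta_in[OF lp l0 csl] by (simp add: f_def)
  have val: "f i ((3 * real j) *\<^sub>R v0, 1) = (if i = j then 1 else 0)" for i j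
  proof -
    have "\<phi> ((3 * real j) *\<^sub>R v0) = (3 * real j) *\<^sub>R w0" using lp by (simp add: linear_scale w0_def)
    moreover have "(3 * real j) *\<^sub>R w0 \<in> range \<phi>" using calculation by (metis rangeI)
    moreover have "\<beta> ((3 * real j) *\<^sub>R w0) = 3 * real j" using ww by (simp add: \<beta>_def)
    moreover have "tent (3 * real j - 3 * real i) = (if i = j then 1 else 0)"
    proof (cases "i = j")
      case False
      then have "\<bar>real j - real i\<bar> \<ge> 1" by linarith
      then show ?thesis using False by (simp add: tent_def)
    qed (simp add: tent_def)
    ultimately show ?thesis by (simp add: f_def zeta_def cf_def)
  qed
  show "\<exists>f :: nat \<Rightarrow> 'v \<times> real \<Rightarrow> real. (\<forall>i<n. f i \<in> lie_quasi_states \<phi>) \<and>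
        (\<forall>a :: nat \<Rightarrow> real. (\<forall>x. (\<Sum>i<n. a i * f i x) = 0) \<longrightarrow> (\<forall>i<n. a i = 0))"
  proof (intro exI[of _ f] conjI mem allI impI)
    fix a :: "nat \<Rightarrow> real" and j assume h: "\<forall>x. (\<Sum>i<n. a i * f i x) = 0" and j: "j < n"
    have "(\<Sum>i<n. a i * f i ((3 * real j) *\<^sub>R v0, 1)) = a j"
      using j by (simp add: val if_distrib cong: if_cong)
    then show "a j = 0" using h by simp
  qed
qed

theorem mainTheorem10:
  fixes \<phi> :: "'v::euclidean_space \<Rightarrow> 'v"
  assumes "linear \<phi>" and "\<phi> \<noteq> (\<lambda>v. 0)"
  shows "(\<forall>(a::real) (b::real) \<alpha> c \<alpha>' c'.
            zeta \<phi> (\<lambda>v. a * \<alpha> v + b * \<alpha>' v) (\<lambda>w. a * c w + b * c' w)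
              = (\<lambda>X. a * zeta \<phi> \<alpha> c X + b * zeta \<phi> \<alpha>' c' X))
         \<and> bij_betw (\<lambda>(\<alpha>, c). zeta \<phi> \<alpha> c) (dual_space \<times> Csl (range \<phi>)) (lie_quasi_states \<phi>)
         \<and> infinite_dimensional_fun_set (lie_quasi_states \<phi>)"
proof (intro conjI allI)
  fix a b :: real and \<alpha> c \<alpha>' c' :: "'v \<Rightarrow> real"
  show "zeta \<phi> (\<lambda>v. a * \<alpha> v + b * \<alpha>' v) (\<lambda>w. a * c w + b * c' w)
              = (\<lambda>X. a * zeta \<phi> \<alpha> c X + b * zeta \<phi> \<alpha>' c' X)"
    by (rule ext) (simp add: zeta_def algebra_simps)
next
  show "bij_betw (\<lambda>(\<alpha>, c). zeta \<phi> \<alpha> c) (dual_space \<times> Csl (range \<phi>)) (lie_quasi_states \<phi>)"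
    unfolding bij_betw_def
  proof (intro conjI)
    show "inj_on (\<lambda>(\<alpha>, c). zeta \<phi> \<alpha> c) (dual_space \<times> Csl (range \<phi>))"
      by (rule inj_onI) (auto dest: zeta_inj)
    show "(\<lambda>(\<alpha>, c). zeta \<phi> \<alpha> c) ` (dual_space \<times> Csl (range \<phi>)) = lie_quasi_states \<phi>"
    proof
      show "(\<lambda>(\<alpha>, c). zeta \<phi> \<alpha> c) ` (dual_space \<times> Csl (range \<phi>)) \<subseteq> lie_quasi_states \<phi>"
        using zeta_in[OF assms(1)] by (auto simp: dual_space_def)
      show "lie_quasi_states \<phi> \<subseteq> (\<lambda>(\<alpha>, c). zeta \<phi> \<alpha> c) ` (dual_space \<times> Csl (range \<phi>))"
      proof
        fix \<zeta> assume "\<zeta> \<in> lie_quasi_states \<phi>"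
        then obtain \<alpha> c where "linear \<alpha>" "c \<in> Csl (range \<phi>)" "\<zeta> = zeta \<phi> \<alpha> c"
          using zeta_surj[OF assms(1)] by blast
        then show "\<zeta> \<in> (\<lambda>(\<alpha>, c). zeta \<phi> \<alpha> c) ` (dual_space \<times> Csl (range \<phi>))"
          by (intro rev_image_eqI[of "(\<alpha>, c)"]) (auto simp: dual_space_def)
      qed
    qed
  qed
next
  show "infinite_dimensional_fun_set (lie_quasi_states \<phi>)" using inf_dim[OF assms] .
qed

end
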